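(* Every connected triangulated $2$-manifold (possibly with boundary) has a facet path.
   Context: A triangulated $2$-manifold is a finite collection of triangles (called facets), each with three distinct vertices, glued together along edges so that the resulting space is a $2$-manifold, possibly with boundary; it need not be a simplicial complex (two facets may share more than one edge). The (vertex-facet) incidence graph is the bipartite graph whose nodes are the facets and vertices, with an arc $(v,f)$ whenever $v$ is a vertex of $f$. A facet path is a trail $(v_0,f_1,v_1,f_2,\dots,f_k,v_k)$ in the incidence graph (consecutive nodes adjacent, no arc repeated) that contains every facet node exactly once; vertex nodes may repeat. *)

theory Defs
  imports Main
begin

text \<open>
Combinatorial model of a triangulated 2-manifold (possibly with boundary, not necessarily
a simplicial complex).  Each facet f has
three corners indexed 0,1,2, and vx f i is the vertex (of the resulting space) at corner i;
the three vertices of a facet are distinct.  Side i of a facet is the side opposite corner i,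
i.e. the side joining corners (i+1) mod 3 and (i+2) mod 3.  The gluing is a symmetric
relation G on sides (f,i): each side is glued to at most one other side, and glued sides
have the same pair of endpoint vertices (the identification of endpoints is then forced
by the labels).  The manifold conditions are: (edges) each side is glued to at most one
other side; (vertices) the link of every vertex is connected, i.e. all corners carrying the
same vertex label are connected through gluings of sides containing that corner (a
connected graph of maximum degree 2, hence a path or cycle: the vertex has a disk or
half-disk neighbourhood).  This last condition also guarantees that vertex labels are
exactly the classes of corners identified by the gluing.
\<close>

definition side_corners :: "nat \<Rightarrow> nat set" where
  "side_corners i = {(i + 1) mod 3, (i + 2) mod 3}"

definition facet_vertices :: "('f \<Rightarrow> nat \<Rightarrow> 'v) \<Rightarrow> 'f \<Rightarrow> 'v set" where
  "facet_vertices vx f = vx f ` {0, 1, 2}"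

definition corner_adj ::
  "('f \<Rightarrow> nat \<Rightarrow> 'v) \<Rightarrow> ('f \<times> nat \<Rightarrow> 'f \<times> nat \<Rightarrow> bool) \<Rightarrow> 'f \<times> nat \<Rightarrow> 'f \<times> nat \<Rightarrow> bool" where
  "corner_adj vx G c d \<longleftrightarrow>
     vx (fst c) (snd c) = vx (fst d) (snd d) \<and>
     (\<exists>a b. G (fst c, a) (fst d, b) \<and> snd c \<in> side_corners a \<and> snd d \<in> side_corners b)"

definition tri_manifold ::
  "'f set \<Rightarrow> ('f \<Rightarrow> nat \<Rightarrow> 'v) \<Rightarrow> ('f \<times> nat \<Rightarrow> 'f \<times> nat \<Rightarrow> bool) \<Rightarrow> bool" where
  "tri_manifold F vx G \<longleftrightarrow>
     finite F \<and>
     (\<forall>f\<in>F. inj_on (vx f) {0, 1, 2}) \<and>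
     (\<forall>s t. G s t \<longrightarrow> fst s \<in> F \<and> fst t \<in> F \<and> snd s < 3 \<and> snd t < 3) \<and>
     (\<forall>s t. G s t \<longrightarrow> G t s) \<and>
     (\<forall>s. \<not> G s s) \<and>
     (\<forall>s t u. G s t \<longrightarrow> G s u \<longrightarrow> t = u) \<and>
     (\<forall>f i g j. G (f, i) (g, j) \<longrightarrow> vx f ` side_corners i = vx g ` side_corners j) \<and>
     (\<forall>f\<in>F. \<forall>g\<in>F. \<forall>i<3. \<forall>j<3. vx f i = vx g j \<longrightarrow>
        (corner_adj vx G)\<^sup>*\<^sup>* (f, i) (g, j))"

definition connected_tri_manifold ::
  "'f set \<Rightarrow> ('f \<Rightarrow> nat \<Rightarrow> 'v) \<Rightarrow> ('f \<times> nat \<Rightarrow> 'f \<times> nat \<Rightarrow> bool) \<Rightarrow> bool" where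
  "connected_tri_manifold F vx G \<longleftrightarrow>
     tri_manifold F vx G \<and> F \<noteq> {} \<and>
     (\<forall>f\<in>F. \<forall>g\<in>F. (\<lambda>f' g'. \<exists>i j. G (f', i) (g', j))\<^sup>*\<^sup>* f g)"

text \<open>A facet path (v_0, f_1, v_1, ..., f_k, v_k): vs = [v_0,...,v_k], fs = [f_1,...,f_k].
It is a trail in the vertex-facet incidence graph (consecutive nodes adjacent, no arc
repeated; an arc is a pair (vertex, facet)) containing every facet node exactly once.\<close>
definition trail_arcs :: "'v list \<Rightarrow> 'f list \<Rightarrow> ('v \<times> 'f) list" where
  "trail_arcs vs fs = concat (map (\<lambda>i. [(vs ! i, fs ! i), (vs ! Suc i, fs ! i)]) [0..<length fs])"

definition facet_path ::
  "'f set \<Rightarrow> ('f \<Rightarrow> nat \<Rightarrow> 'v) \<Rightarrow> 'v list \<Rightarrow> 'f list \<Rightarrow> bool" where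
  "facet_path F vx vs fs \<longleftrightarrow>
     length vs = Suc (length fs) \<and>
     (\<forall>i<length fs. fs ! i \<in> F \<and> vs ! i \<in> facet_vertices vx (fs ! i)
                    \<and> vs ! Suc i \<in> facet_vertices vx (fs ! i)) \<and>
     distinct (trail_arcs vs fs) \<and>
     distinct fs \<and> set fs = F"

end

theory Submission
  imports Defs
begin

fun walk :: "('f \<Rightarrow> nat \<Rightarrow> 'v) \<Rightarrow> 'v list \<Rightarrow> 'f list \<Rightarrow> bool" where
  "walk vx [v] [] = True"
| "walk vx (v # w # vs) (f # fs) = (v \<in> facet_vertices vx f \<and> w \<in> facet_vertices vx f \<and> v \<noteq> w \<and> walk vx (w # vs) fs)"
| "walk vx _ _ = False"

lemma walk_ne: "walk vx vs fs \<Longrightarrow> vs \<noteq> []"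
  by (cases "(vx,vs,fs)" rule: walk.cases) auto

lemma walk_length: "walk vx vs fs \<Longrightarrow> length vs = Suc (length fs)"
  by (induction vx vs fs rule: walk.induct) auto

lemma walk_append: "walk vx vs1 fs1 \<Longrightarrow> walk vx vs2 fs2 \<Longrightarrow> last vs1 = hd vs2 \<Longrightarrow> walk vx (vs1 @ tl vs2) (fs1 @ fs2)"
proof (induction vx vs1 fs1 rule: walk.induct)
  case (1 vx v)
  then show ?case using walk_ne[of vx vs2 fs2] by (cases vs2) auto
next
  case (2 vx v w vs f fs)
  then show ?case by auto
qed auto

lemma walk_rev: "walk vx vs fs \<Longrightarrow> walk vx (rev vs) (rev fs)"
proof (induction vx vs fs rule: walk.induct)
  case (2 vx v w vs f fs)
  then have "walk vx (rev (w # vs) @ tl [w, v]) (rev fs @ [f])"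
    by (intro walk_append) auto
  then show ?case by simp
qed auto

lemma walk_nth: "walk vx vs fs \<Longrightarrow> i < length fs \<Longrightarrow> vs ! i \<in> facet_vertices vx (fs ! i) \<and> vs ! Suc i \<in> facet_vertices vx (fs ! i)"
proof (induction vx vs fs arbitrary: i rule: walk.induct)
  case (2 vx v w vs f fs)
  then show ?case by (cases i) auto
qed auto

lemma trail_arcs_Cons: "trail_arcs (v # w # vs) (f # fs) = (v, f) # (w, f) # trail_arcs (w # vs) fs"
  by (simp add: trail_arcs_def upt_conv_Cons map_Suc_upt[symmetric] o_def del: upt_Suc)

lemma trail_arcs_distinct: "walk vx vs fs \<Longrightarrow> distinct fs \<Longrightarrow> distinct (trail_arcs vs fs) \<and> snd ` set (trail_arcs vs fs) \<subseteq> set fs"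
proof (induction vx vs fs rule: walk.induct)
  case (1 vx v)
  then show ?case by (simp add: trail_arcs_def)
next
  case (2 vx v w vs f fs)
  then show ?case by (auto simp: trail_arcs_Cons)
qed auto

definition fp where "fp vx X vs fs \<longleftrightarrow> walk vx vs fs \<and> distinct fs \<and> set fs = X"

lemma fp_facet_path: "fp vx F vs fs \<Longrightarrow> facet_path F vx vs fs"
  unfolding fp_def facet_path_def
  using walk_length walk_nth trail_arcs_distinct nth_mem by metis

definition P where "P vx X u w \<longleftrightarrow> (\<exists>vs fs. fp vx X vs fs \<and> hd vs = u \<and> last vs = w)"

lemma P_empty: "P vx {} u u"
  unfolding P_def fp_def by (rule exI[of _ "[u]"], rule exI[of _ "[]"]) auto

lemma P_single: "u \<in> facet_vertices vx g \<Longrightarrow> w \<in> facet_vertices vx g \<Longrightarrow> u \<noteq> w \<Longrightarrow> P vx {g} u w"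
  unfolding P_def fp_def by (rule exI[of _ "[u,w]"], rule exI[of _ "[g]"]) auto

lemma P_rev: "P vx X u w \<Longrightarrow> P vx X w u"
  unfolding P_def fp_def
  by (metis walk_rev distinct_rev set_rev walk_ne hd_rev last_rev)

lemma last_append_tl: "vs1 \<noteq> [] \<Longrightarrow> vs2 \<noteq> [] \<Longrightarrow> last vs1 = hd vs2 \<Longrightarrow> last (vs1 @ tl vs2) = last vs2"
  by (cases vs2) auto

lemma P_join: "P vx X u w \<Longrightarrow> P vx Y w z \<Longrightarrow> X \<inter> Y = {} \<Longrightarrow> Z = X \<union> Y \<Longrightarrow> P vx Z u z"
proof -
  assume "P vx X u w" "P vx Y w z" and d: "X \<inter> Y = {}" and Z: "Z = X \<union> Y"
  then obtain vs1 fs1 vs2 fs2 where 1: "fp vx X vs1 fs1" "hd vs1 = u" "last vs1 = w"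
    and 2: "fp vx Y vs2 fs2" "hd vs2 = w" "last vs2 = z" unfolding P_def by blast
  have ne: "vs1 \<noteq> []" "vs2 \<noteq> []" using 1 2 walk_ne unfolding fp_def by blast+
  have "walk vx (vs1 @ tl vs2) (fs1 @ fs2)"
    using 1 2 walk_append[of vx vs1 fs1 vs2 fs2] unfolding fp_def by auto
  then have "fp vx Z (vs1 @ tl vs2) (fs1 @ fs2)"
    using 1 2 d Z unfolding fp_def by auto
  moreover have "hd (vs1 @ tl vs2) = u" using ne 1 by simp
  moreover have "last (vs1 @ tl vs2) = z" using ne 1 2 last_append_tl by metis
  ultimately show ?thesis unfolding P_def by blast
qed

definition good where "good vx X u w \<longleftrightarrow> P vx X u w \<or> (P vx X u u \<and> P vx X w w)"

lemma good_empty: "good vx {} u w" unfolding good_def using P_empty by fast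

lemma good_sym: "good vx X u w \<Longrightarrow> good vx X w u" unfolding good_def using P_rev[of vx X u w] P_rev[of vx X w u] by blast

lemma good_set: "good vx X u w \<Longrightarrow> {u, w} = {u', w'} \<Longrightarrow> good vx X u' w'"
  using good_sym by (metis doubleton_eq_iff)

lemma combine2:
  assumes abc: "a \<in> facet_vertices vx g" "b \<in> facet_vertices vx g" "c \<in> facet_vertices vx g"
    "a \<noteq> b" "a \<noteq> c" "b \<noteq> c"
    and gP: "good vx PP a c" and gQ: "good vx Q c b"
    and d: "g \<notin> PP" "g \<notin> Q" "PP \<inter> Q = {}"
  shows "good vx (insert g (PP \<union> Q)) a b"
proof -
  have s: "\<And>u w. u \<in> facet_vertices vx g \<Longrightarrow> w \<in> facet_vertices vx g \<Longrightarrow> u \<noteq> w \<Longrightarrow> P vx {g} u w"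
    by (rule P_single)
  consider "P vx PP a c" "P vx Q c b" | "P vx PP a c" "P vx Q c c" | "P vx PP a a" "P vx Q c b"
    | "P vx PP a a" "P vx Q b b"
    using gP gQ unfolding good_def by blast
  then show ?thesis
  proof cases
    case 1
    have "P vx ({g} \<union> Q) a c"
      by (rule P_join[OF s[of a b] P_rev[OF 1(2)]]) (use abc d in auto)
    then have "P vx (insert g (PP \<union> Q)) a a"
      by (rule P_join[OF _ P_rev[OF 1(1)]]) (use abc d in auto)
    moreover have "P vx ({g} \<union> PP) b c"
      by (rule P_join[OF s[of b a] 1(1)]) (use abc d in auto)
    then have "P vx (insert g (PP \<union> Q)) b b"
      by (rule P_join[OF _ 1(2)]) (use abc d in auto)
    ultimately show ?thesis unfolding good_def by blast
  next
    case 2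
    have "P vx (PP \<union> Q) a c" by (rule P_join[OF 2(1) 2(2)]) (use d in auto)
    then have "P vx (insert g (PP \<union> Q)) a b"
      by (rule P_join[OF _ s[of c b]]) (use abc d in auto)
    then show ?thesis unfolding good_def by blast
  next
    case 3
    have "P vx (PP \<union> {g}) a c" by (rule P_join[OF 3(1) s[of a c]]) (use abc d in auto)
    then have "P vx (insert g (PP \<union> Q)) a b"
      by (rule P_join[OF _ 3(2)]) (use abc d in auto)
    then show ?thesis unfolding good_def by blast
  next
    case 4
    have "P vx (PP \<union> {g}) a b" by (rule P_join[OF 4(1) s[of a b]]) (use abc d in auto)
    then have "P vx (insert g (PP \<union> Q)) a b"
      by (rule P_join[OF _ 4(2)]) (use abc d in auto)
    then show ?thesis unfolding good_def by blast
  qed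
qed

lemma good_join:
  assumes "good vx A u w" "good vx B u w" "A \<inter> B = {}"
  shows "\<exists>vs fs. fp vx (A \<union> B) vs fs"
proof -
  have "P vx (A \<union> B) u u \<or> P vx (A \<union> B) u w"
    using assms unfolding good_def
    by (metis P_join P_rev)
  then show ?thesis unfolding P_def by blast
qed


definition E :: "('f \<times> nat \<Rightarrow> 'f \<times> nat \<Rightarrow> bool) \<Rightarrow> 'f set \<Rightarrow> 'f \<Rightarrow> 'f \<Rightarrow> bool" where
  "E G X f h \<longleftrightarrow> f \<in> X \<and> h \<in> X \<and> (\<exists>i j. G (f, i) (h, j))"

definition conn where "conn G X g \<longleftrightarrow> g \<in> X \<and> (\<forall>h\<in>X. (E G X)\<^sup>*\<^sup>* g h)"

definition reach where
  "reach G X g s = {h. \<exists>t. G (g, s) t \<and> fst t \<in> X - {g} \<and> (E G (X - {g}))\<^sup>*\<^sup>* (fst t) h}"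

lemma tm_G: assumes "tri_manifold F vx G" "G s t" shows "fst s \<in> F \<and> fst t \<in> F \<and> snd s < 3 \<and> snd t < 3"
proof -
  have "\<forall>s t. G s t \<longrightarrow> fst s \<in> F \<and> fst t \<in> F \<and> snd s < 3 \<and> snd t < 3"
    using assms(1) unfolding tri_manifold_def by (elim conjE) assumption
  then show ?thesis using assms(2) by blast
qed
lemma tm_sym: assumes "tri_manifold F vx G" "G s t" shows "G t s"
proof -
  have "\<forall>s t. G s t \<longrightarrow> G t s"
    using assms(1) unfolding tri_manifold_def by (elim conjE) assumption
  then show ?thesis using assms(2) by blast
qed
lemma tm_uniq: assumes "tri_manifold F vx G" "G s t" "G s u" shows "t = u"
proof -
  have "\<forall>s t u. G s t \<longrightarrow> G s u \<longrightarrow> t = u"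
    using assms(1) unfolding tri_manifold_def by (elim conjE) assumption
  then show ?thesis using assms(2,3) by blast
qed
lemma tm_lab: assumes "tri_manifold F vx G" "G (f, i) (g, j)" shows "vx f ` side_corners i = vx g ` side_corners j"
proof -
  have "\<forall>f i g j. G (f, i) (g, j) \<longrightarrow> vx f ` side_corners i = vx g ` side_corners j"
    using assms(1) unfolding tri_manifold_def by (elim conjE) assumption
  then show ?thesis using assms(2) by blast
qed
lemma tm_inj: assumes "tri_manifold F vx G" "f \<in> F" shows "inj_on (vx f) {0, 1, 2}"
proof -
  have "\<forall>f\<in>F. inj_on (vx f) {0, 1, 2}"
    using assms(1) unfolding tri_manifold_def by (elim conjE) assumption
  then show ?thesis using assms(2) by blast
qed
lemma tm_fin: assumes "tri_manifold F vx G" shows "finite F"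
  using assms(1) unfolding tri_manifold_def by (elim conjE) assumption

lemma E_sym: "tri_manifold F vx G \<Longrightarrow> E G X f h \<Longrightarrow> E G X h f"
  unfolding E_def using tm_sym by blast

lemma rt_sym: assumes tm: "tri_manifold F vx G" and r: "(E G X)\<^sup>*\<^sup>* x y" shows "(E G X)\<^sup>*\<^sup>* y x"
  using r
proof (induction rule: rtranclp_induct)
  case base then show ?case by simp
next
  case (step y z)
  then show ?case using E_sym[OF tm step(2)] converse_rtranclp_into_rtranclp by metis
qed

lemma rt_in: "(E G X)\<^sup>*\<^sup>* x y \<Longrightarrow> x \<in> X \<Longrightarrow> y \<in> X"
  by (induction rule: rtranclp_induct) (auto simp: E_def)

lemma reach_sub: "reach G X g s \<subseteq> X - {g}"
  unfolding reach_def using rt_in by fastforce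

lemma reach_eq:
  assumes tm: "tri_manifold F vx G" and h: "h \<in> reach G X g s" "h \<in> reach G X g s'"
  shows "reach G X g s = reach G X g s'"
proof -
  obtain t where t: "G (g, s) t" "fst t \<in> X - {g}" "(E G (X - {g}))\<^sup>*\<^sup>* (fst t) h"
    using h unfolding reach_def by blast
  obtain t' where t': "G (g, s') t'" "fst t' \<in> X - {g}" "(E G (X - {g}))\<^sup>*\<^sup>* (fst t') h"
    using h unfolding reach_def by blast
  have 1: "(E G (X - {g}))\<^sup>*\<^sup>* (fst t) (fst t')" using t(3) rt_sym[OF tm t'(3)] by simp
  have 2: "(E G (X - {g}))\<^sup>*\<^sup>* (fst t') (fst t)" using rt_sym[OF tm 1] .
  show ?thesis
  proof
    show "reach G X g s \<subseteq> reach G X g s'"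
    proof
      fix x assume "x \<in> reach G X g s"
      then obtain u where "G (g, s) u" "(E G (X - {g}))\<^sup>*\<^sup>* (fst u) x" unfolding reach_def by blast
      then have "u = t" using tm_uniq[OF tm] t(1) by blast
      then have "(E G (X - {g}))\<^sup>*\<^sup>* (fst t') x"
        using rtranclp_trans[OF 2, of x] \<open>(E G (X - {g}))\<^sup>*\<^sup>* (fst u) x\<close> by simp
      then show "x \<in> reach G X g s'" unfolding reach_def using t'(1,2) by blast
    qed
  next
    show "reach G X g s' \<subseteq> reach G X g s"
    proof
      fix x assume "x \<in> reach G X g s'"
      then obtain u where "G (g, s') u" "(E G (X - {g}))\<^sup>*\<^sup>* (fst u) x" unfolding reach_def by blast
      then have "u = t'" using tm_uniq[OF tm] t'(1) by blast
      then have "(E G (X - {g}))\<^sup>*\<^sup>* (fst t) x"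
        using rtranclp_trans[OF 1, of x] \<open>(E G (X - {g}))\<^sup>*\<^sup>* (fst u) x\<close> by simp
      then show "x \<in> reach G X g s" unfolding reach_def using t(1,2) by blast
    qed
  qed
qed

lemma rt_restrict:
  assumes "(E G Y)\<^sup>*\<^sup>* x y" "\<And>z. (E G Y)\<^sup>*\<^sup>* x z \<Longrightarrow> z \<in> K" "K \<subseteq> Y"
  shows "(E G K)\<^sup>*\<^sup>* x y"
  using assms(1)
proof (induction rule: rtranclp_induct)
  case base then show ?case by simp
next
  case (step y z)
  have "y \<in> K" using assms(2) step.hyps(1) .
  moreover have "z \<in> K" using assms(2) rtranclp.rtrancl_into_rtrancl[OF step.hyps(1,2)] .
  ultimately have e: "E G K y z" using step.hyps(2) unfolding E_def by simp
  show ?case using rtranclp.rtrancl_into_rtrancl[OF step.IH e] .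
qed

lemma reach_conn:
  assumes tm: "tri_manifold F vx G" and h: "h \<in> reach G X g s"
  shows "\<exists>h0 s'. G (g, s) (h0, s') \<and> conn G (reach G X g s) h0"
proof -
  obtain t where t: "G (g, s) t" "fst t \<in> X - {g}" "(E G (X - {g}))\<^sup>*\<^sup>* (fst t) h"
    using h unfolding reach_def by blast
  have R: "reach G X g s = {x. (E G (X - {g}))\<^sup>*\<^sup>* (fst t) x}"
  proof (intro set_eqI iffI)
    fix x assume "x \<in> reach G X g s"
    then obtain u where u: "G (g, s) u" "(E G (X - {g}))\<^sup>*\<^sup>* (fst u) x" unfolding reach_def by blast
    have "u = t" using tm_uniq[OF tm u(1) t(1)] .
    then show "x \<in> {x. (E G (X - {g}))\<^sup>*\<^sup>* (fst t) x}" using u(2) by simp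
  next
    fix x assume "x \<in> {x. (E G (X - {g}))\<^sup>*\<^sup>* (fst t) x}"
    then show "x \<in> reach G X g s" unfolding reach_def using t(1,2) by blast
  qed
  have "conn G (reach G X g s) (fst t)"
    unfolding conn_def
  proof
    show "fst t \<in> reach G X g s" using R by simp
    show "\<forall>y\<in>reach G X g s. (E G (reach G X g s))\<^sup>*\<^sup>* (fst t) y"
    proof
      fix y assume "y \<in> reach G X g s"
      then have y: "(E G (X - {g}))\<^sup>*\<^sup>* (fst t) y" using R by simp
      show "(E G (reach G X g s))\<^sup>*\<^sup>* (fst t) y"
      proof (rule rt_restrict[OF y])
        fix z assume "(E G (X - {g}))\<^sup>*\<^sup>* (fst t) z"
        then show "z \<in> reach G X g s" using R by simp
      next
        show "reach G X g s \<subseteq> X - {g}" by (rule reach_sub)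
      qed
    qed
  qed
  then show ?thesis using t(1) by (metis prod.collapse)
qed

lemma cover:
  assumes tm: "tri_manifold F vx G" and c: "conn G X g"
  shows "X = insert g (reach G X g 0 \<union> reach G X g 1 \<union> reach G X g 2)"
proof -
  have "h = g \<or> (\<exists>s<3. h \<in> reach G X g s)" if "(E G X)\<^sup>*\<^sup>* g h" for h
    using that
  proof (induction rule: rtranclp_induct)
    case base then show ?case by simp
  next
    case (step y z)
    show ?case
    proof (cases "z = g")
      case True then show ?thesis by simp
    next
      case False
      from step(2) obtain i j where e: "y \<in> X" "z \<in> X" "G (y, i) (z, j)" unfolding E_def by blast
      from step(3) show ?thesis
      proof
        assume "y = g"
        then have ge: "G (g, i) (z, j)" using e(3) by simp
        have "i < 3" using tm_G[OF tm ge] by simp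
        moreover have "z \<in> reach G X g i" unfolding reach_def
          by (rule CollectI, rule exI[of _ "(z, j)"]) (use e False ge in simp)
        ultimately show ?thesis by blast
      next
        assume "\<exists>s<3. y \<in> reach G X g s"
        then obtain s where s: "s < 3" "y \<in> reach G X g s" by blast
        then obtain t where t: "G (g, s) t" "fst t \<in> X - {g}" "(E G (X - {g}))\<^sup>*\<^sup>* (fst t) y"
          unfolding reach_def by blast
        have "y \<in> X - {g}" using s(2) reach_sub[of G X g s] by blast
        then have "E G (X - {g}) y z" using e False unfolding E_def by blast
        then have "(E G (X - {g}))\<^sup>*\<^sup>* (fst t) z" using rtranclp.rtrancl_into_rtrancl[OF t(3)] by simp
        then have "z \<in> reach G X g s" unfolding reach_def using t(1,2) by blast
        then show ?thesis using s by blast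
      qed
    qed
  qed
  note A = this
  have s3: "\<And>s. s < 3 \<Longrightarrow> s = 0 \<or> s = 1 \<or> s = (2::nat)" by auto
  show ?thesis
  proof (intro equalityI subsetI)
    fix x assume "x \<in> X"
    then have "(E G X)\<^sup>*\<^sup>* g x" using c unfolding conn_def by blast
    then have "x = g \<or> (\<exists>s<3. x \<in> reach G X g s)" by (rule A)
    then show "x \<in> insert g (reach G X g 0 \<union> reach G X g 1 \<union> reach G X g 2)"
      using s3 by blast
  next
    fix x assume "x \<in> insert g (reach G X g 0 \<union> reach G X g 1 \<union> reach G X g 2)"
    then show "x \<in> X" using c reach_sub[of G X g] unfolding conn_def by blast
  qed
qed


lemma child_diff:
  assumes tm: "tri_manifold F vx G" and K: "K = reach G X g s - U"
    and U: "U = (\<Union>s''\<in>A. reach G X g s'')"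
  shows "K = {} \<or> (\<exists>h s'. G (g, s) (h, s') \<and> conn G K h)"
proof (cases "K = reach G X g s")
  case True
  show ?thesis
  proof (cases "reach G X g s = {}")
    case True then show ?thesis using \<open>K = reach G X g s\<close> by simp
  next
    case False
    then obtain h where "h \<in> reach G X g s" by blast
    then show ?thesis using reach_conn[OF tm] True by metis
  qed
next
  case False
  then obtain x where x: "x \<in> reach G X g s" "x \<in> U" using K by blast
  then obtain s'' where s'': "s'' \<in> A" "x \<in> reach G X g s''" using U by blast
  have "reach G X g s = reach G X g s''" using reach_eq[OF tm x(1) s''(2)] .
  then have "reach G X g s \<subseteq> U" using U s''(1) by blast
  then show ?thesis using K by blast
qed

lemma decomp:
  assumes tm: "tri_manifold F vx G" and c: "conn G X g"
  obtains K0 K1 K2 where "X = insert g (K0 \<union> K1 \<union> K2)" "K0 \<inter> K1 = {}" "K0 \<inter> K2 = {}" "K1 \<inter> K2 = {}"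
    "K0 \<subseteq> X - {g}" "K1 \<subseteq> X - {g}" "K2 \<subseteq> X - {g}"
    "K0 = {} \<or> (\<exists>h s'. G (g, 0) (h, s') \<and> conn G K0 h)"
    "K1 = {} \<or> (\<exists>h s'. G (g, 1) (h, s') \<and> conn G K1 h)"
    "K2 = {} \<or> (\<exists>h s'. G (g, 2) (h, s') \<and> conn G K2 h)"
proof -
  let ?R = "reach G X g"
  define K0 where "K0 = ?R 0 - (\<Union>s''\<in>{}. ?R s'')"
  define K1 where "K1 = ?R 1 - (\<Union>s''\<in>{0}. ?R s'')"
  define K2 where "K2 = ?R 2 - (\<Union>s''\<in>{0,1}. ?R s'')"
  have c0: "K0 = {} \<or> (\<exists>h s'. G (g, 0) (h, s') \<and> conn G K0 h)"
    by (rule child_diff[OF tm K0_def refl])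
  have c1: "K1 = {} \<or> (\<exists>h s'. G (g, 1) (h, s') \<and> conn G K1 h)"
    by (rule child_diff[OF tm K1_def refl])
  have c2: "K2 = {} \<or> (\<exists>h s'. G (g, 2) (h, s') \<and> conn G K2 h)"
    by (rule child_diff[OF tm K2_def refl])
  have cov: "X = insert g (?R 0 \<union> ?R 1 \<union> ?R 2)" by (rule cover[OF tm c])
  have sub: "?R 0 \<subseteq> X - {g}" "?R 1 \<subseteq> X - {g}" "?R 2 \<subseteq> X - {g}" by (rule reach_sub)+
  have e: "X = insert g (K0 \<union> K1 \<union> K2)" using cov unfolding K0_def K1_def K2_def by auto
  have d: "K0 \<inter> K1 = {}" "K0 \<inter> K2 = {}" "K1 \<inter> K2 = {}"
    unfolding K0_def K1_def K2_def by auto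
  have s: "K0 \<subseteq> X - {g}" "K1 \<subseteq> X - {g}" "K2 \<subseteq> X - {g}"
    using sub unfolding K0_def K1_def K2_def by auto
  show ?thesis by (rule that[OF e d s c0 c1 c2])
qed

lemma child_good:
  assumes tm: "tri_manifold F vx G" and gX: "g \<in> X" and XF: "X \<subseteq> F" and fin: "finite X"
    and KX: "K \<subseteq> X - {g}"
    and Kc: "K = {} \<or> (\<exists>h s'. G (g, s) (h, s') \<and> conn G K h)"
    and IH: "\<And>Y h j. card Y < card X \<Longrightarrow> Y \<subseteq> F \<Longrightarrow> conn G Y h \<Longrightarrow> j < 3 \<Longrightarrow>
        (\<forall>h2 s2. G (h, j) (h2, s2) \<longrightarrow> h2 \<notin> Y) \<Longrightarrow> good vx Y (vx h ((j+1) mod 3)) (vx h ((j+2) mod 3))"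
  shows "good vx K (vx g ((s+1) mod 3)) (vx g ((s+2) mod 3))"
  using Kc
proof
  assume "K = {}" then show ?thesis by (simp add: good_empty)
next
  assume "\<exists>h s'. G (g, s) (h, s') \<and> conn G K h"
  then obtain h s' where hs: "G (g, s) (h, s')" "conn G K h" by blast
  have "K \<subset> X" using KX gX by blast
  then have card: "card K < card X" using psubset_card_mono[OF fin] by blast
  have KF: "K \<subseteq> F" using KX XF by blast
  have s': "s' < 3" using tm_G[OF tm hs(1)] by simp
  have side: "\<forall>h2 s2. G (h, s') (h2, s2) \<longrightarrow> h2 \<notin> K"
  proof (intro allI impI)
    fix h2 s2 assume "G (h, s') (h2, s2)"
    moreover have "G (h, s') (g, s)" using tm_sym[OF tm hs(1)] .
    ultimately have "(h2, s2) = (g, s)" using tm_uniq[OF tm] by blast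
    then show "h2 \<notin> K" using KX by blast
  qed
  have gK: "good vx K (vx h ((s'+1) mod 3)) (vx h ((s'+2) mod 3))"
    using IH[OF card KF hs(2) s' side] .
  have "vx g ` side_corners s = vx h ` side_corners s'" using tm_lab[OF tm hs(1)] .
  then have "{vx h ((s'+1) mod 3), vx h ((s'+2) mod 3)} = {vx g ((s+1) mod 3), vx g ((s+2) mod 3)}"
    unfolding side_corners_def by simp
  then show ?thesis using good_set[OF gK] by blast
qed

lemma tri_labels:
  assumes tm: "tri_manifold F vx G" and gF: "g \<in> F"
  shows "vx g 0 \<in> facet_vertices vx g" "vx g 1 \<in> facet_vertices vx g" "vx g 2 \<in> facet_vertices vx g"
    "vx g 0 \<noteq> vx g 1" "vx g 0 \<noteq> vx g 2" "vx g 1 \<noteq> vx g 2"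
proof -
  have i: "inj_on (vx g) {0, 1, 2}" using tm_inj[OF tm gF] .
  show "vx g 0 \<in> facet_vertices vx g" "vx g 1 \<in> facet_vertices vx g" "vx g 2 \<in> facet_vertices vx g"
    unfolding facet_vertices_def by auto
  show "vx g 0 \<noteq> vx g 1" using inj_onD[OF i, of 0 1] by auto
  show "vx g 0 \<noteq> vx g 2" using inj_onD[OF i, of 0 2] by auto
  show "vx g 1 \<noteq> vx g 2" using inj_onD[OF i, of 1 2] by auto
qed

lemma W:
  assumes tm: "tri_manifold F vx G"
  shows "X \<subseteq> F \<Longrightarrow> conn G X g \<Longrightarrow> i < 3 \<Longrightarrow> (\<forall>h s'. G (g, i) (h, s') \<longrightarrow> h \<notin> X)
    \<Longrightarrow> good vx X (vx g ((i+1) mod 3)) (vx g ((i+2) mod 3))"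
proof (induction "card X" arbitrary: X g i rule: less_induct)
  case less
  have XF: "X \<subseteq> F" and c: "conn G X g" and i3: "i < 3" and hyp: "\<forall>h s'. G (g, i) (h, s') \<longrightarrow> h \<notin> X"
    by fact+
  have gX: "g \<in> X" using c unfolding conn_def by blast
  have gF: "g \<in> F" using gX XF by blast
  have fin: "finite X" using finite_subset[OF XF tm_fin[OF tm]] .
  obtain K0 K1 K2 where D: "X = insert g (K0 \<union> K1 \<union> K2)" "K0 \<inter> K1 = {}" "K0 \<inter> K2 = {}" "K1 \<inter> K2 = {}"
    "K0 \<subseteq> X - {g}" "K1 \<subseteq> X - {g}" "K2 \<subseteq> X - {g}"
    and c0: "K0 = {} \<or> (\<exists>h s'. G (g, 0) (h, s') \<and> conn G K0 h)"
    and c1: "K1 = {} \<or> (\<exists>h s'. G (g, 1) (h, s') \<and> conn G K1 h)"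
    and c2: "K2 = {} \<or> (\<exists>h s'. G (g, 2) (h, s') \<and> conn G K2 h)"
    by (rule decomp[OF tm c])
  have IH: "\<And>Y h j. card Y < card X \<Longrightarrow> Y \<subseteq> F \<Longrightarrow> conn G Y h \<Longrightarrow> j < 3 \<Longrightarrow>
        (\<forall>h2 s2. G (h, j) (h2, s2) \<longrightarrow> h2 \<notin> Y) \<Longrightarrow> good vx Y (vx h ((j+1) mod 3)) (vx h ((j+2) mod 3))"
    by (rule less.hyps) auto
  have e0: "((0::nat)+1) mod 3 = 1" "((0::nat)+2) mod 3 = 2" by simp_all
  have e1: "((1::nat)+1) mod 3 = 2" "((1::nat)+2) mod 3 = 0" by simp_all
  have e2: "((2::nat)+1) mod 3 = 0" "((2::nat)+2) mod 3 = 1" by simp_all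
  have g0: "good vx K0 (vx g 1) (vx g 2)"
    using child_good[OF tm gX XF fin D(5) c0 IH] unfolding e0 .
  have g1: "good vx K1 (vx g 2) (vx g 0)"
    using child_good[OF tm gX XF fin D(6) c1 IH] unfolding e1 .
  have g2: "good vx K2 (vx g 0) (vx g 1)"
    using child_good[OF tm gX XF fin D(7) c2 IH] unfolding e2 .
  have empty: "K = {}" if E1: "K = {} \<or> (\<exists>h s'. G (g, i) (h, s') \<and> conn G K h)" and E2: "K \<subseteq> X - {g}" for K
  proof (rule ccontr)
    assume "K \<noteq> {}"
    then obtain h s' where "G (g, i) (h, s')" "conn G K h" using E1 by blast
    then have "h \<in> X" "G (g, i) (h, s')" using E2 unfolding conn_def by blast+
    then show False using hyp by blast
  qed
  note L = tri_labels[OF tm gF]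
  have gnot: "g \<notin> K0" "g \<notin> K1" "g \<notin> K2" using D(5,6,7) by blast+
  have "i = 0 \<or> i = 1 \<or> i = 2" using i3 by auto
  then show ?case
  proof (elim disjE)
    assume i: "i = 0"
    have "K0 = {}" by (rule empty) (use c0 i in simp, rule D(5))
    then have X: "X = insert g (K2 \<union> K1)" using D(1) by blast
    have dj: "K2 \<inter> K1 = {}" using D(4) by blast
    have "good vx (insert g (K2 \<union> K1)) (vx g 1) (vx g 2)"
      by (rule combine2[OF L(2) L(3) L(1) L(6) not_sym[OF L(4)] not_sym[OF L(5)] good_sym[OF g2] good_sym[OF g1] gnot(3) gnot(2) dj])
    then show ?thesis unfolding i e0 e1 e2 X[symmetric] .
  next
    assume i: "i = 1"
    have "K1 = {}" by (rule empty) (use c1 i in simp, rule D(6))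
    then have X: "X = insert g (K0 \<union> K2)" using D(1) by blast
    have "good vx (insert g (K0 \<union> K2)) (vx g 2) (vx g 0)"
      by (rule combine2[OF L(3) L(1) L(2) not_sym[OF L(5)] not_sym[OF L(6)] L(4) good_sym[OF g0] good_sym[OF g2] gnot(1) gnot(3) D(3)])
    then show ?thesis unfolding i e0 e1 e2 X[symmetric] .
  next
    assume i: "i = 2"
    have "K2 = {}" by (rule empty) (use c2 i in simp, rule D(7))
    then have X: "X = insert g (K1 \<union> K0)" using D(1) by blast
    have dj: "K1 \<inter> K0 = {}" using D(2) by blast
    have "good vx (insert g (K1 \<union> K0)) (vx g 0) (vx g 1)"
      by (rule combine2[OF L(1) L(2) L(3) L(4) L(5) L(6) good_sym[OF g1] good_sym[OF g0] gnot(2) gnot(1) dj])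
    then show ?thesis unfolding i e0 e1 e2 X[symmetric] .
  qed
qed

theorem theorem4:
  fixes F :: "'f set" and vx :: "'f \<Rightarrow> nat \<Rightarrow> 'v"
    and G :: "'f \<times> nat \<Rightarrow> 'f \<times> nat \<Rightarrow> bool"
  assumes "connected_tri_manifold F vx G"
  shows "\<exists>vs fs. facet_path F vx vs fs"
proof -
  have A: "tri_manifold F vx G \<and> F \<noteq> {} \<and>
     (\<forall>f\<in>F. \<forall>g\<in>F. (\<lambda>f' g'. \<exists>i j. G (f', i) (g', j))\<^sup>*\<^sup>* f g)"
    using assms unfolding connected_tri_manifold_def .
  have tm: "tri_manifold F vx G" using A by (rule conjunct1)
  have ne: "F \<noteq> {}" using A by (elim conjE)
  have cn: "\<forall>f\<in>F. \<forall>g\<in>F. (\<lambda>f' g'. \<exists>i j. G (f', i) (g', j))\<^sup>*\<^sup>* f g" using A by (elim conjE)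
  obtain r where rF: "r \<in> F" using ne by blast
  have le: "\<And>x y. (\<lambda>f' g'. \<exists>i j. G (f', i) (g', j)) x y \<Longrightarrow> E G F x y"
  proof -
    fix f' g' assume "(\<lambda>f' g'. \<exists>i j. G (f', i) (g', j)) f' g'"
    then obtain i j where ij: "G (f', i) (g', j)" by blast
    have "f' \<in> F" "g' \<in> F" using tm_G[OF tm ij] by simp_all
    then show "E G F f' g'" unfolding E_def using ij by blast
  qed
  have c: "conn G F r" unfolding conn_def
  proof (intro conjI ballI)
    show "r \<in> F" by fact
    fix h assume "h \<in> F"
    then have "(\<lambda>f' g'. \<exists>i j. G (f', i) (g', j))\<^sup>*\<^sup>* r h" using cn rF by blast
    then show "(E G F)\<^sup>*\<^sup>* r h"
    proof (induction rule: rtranclp_induct)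
      case base then show ?case by simp
    next
      case (step y z)
      show ?case using rtranclp.rtrancl_into_rtrancl[OF step.IH le[OF step.hyps(2)]] .
    qed
  qed
  have fin: "finite F" using tm_fin[OF tm] .
  obtain K0 K1 K2 where D: "F = insert r (K0 \<union> K1 \<union> K2)" "K0 \<inter> K1 = {}" "K0 \<inter> K2 = {}" "K1 \<inter> K2 = {}"
    "K0 \<subseteq> F - {r}" "K1 \<subseteq> F - {r}" "K2 \<subseteq> F - {r}"
    and c0: "K0 = {} \<or> (\<exists>h s'. G (r, 0) (h, s') \<and> conn G K0 h)"
    and c1: "K1 = {} \<or> (\<exists>h s'. G (r, 1) (h, s') \<and> conn G K1 h)"
    and c2: "K2 = {} \<or> (\<exists>h s'. G (r, 2) (h, s') \<and> conn G K2 h)"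
    by (rule decomp[OF tm c])
  have IH: "\<And>Y h j. card Y < card F \<Longrightarrow> Y \<subseteq> F \<Longrightarrow> conn G Y h \<Longrightarrow> j < 3 \<Longrightarrow>
        (\<forall>h2 s2. G (h, j) (h2, s2) \<longrightarrow> h2 \<notin> Y) \<Longrightarrow> good vx Y (vx h ((j+1) mod 3)) (vx h ((j+2) mod 3))"
    using W[OF tm] by blast
  have e0: "((0::nat)+1) mod 3 = 1" "((0::nat)+2) mod 3 = 2" by simp_all
  have e1: "((1::nat)+1) mod 3 = 2" "((1::nat)+2) mod 3 = 0" by simp_all
  have e2: "((2::nat)+1) mod 3 = 0" "((2::nat)+2) mod 3 = 1" by simp_all
  have g0: "good vx K0 (vx r 1) (vx r 2)"
    using child_good[OF tm rF subset_refl fin D(5) c0 IH] unfolding e0 .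
  have g1: "good vx K1 (vx r 2) (vx r 0)"
    using child_good[OF tm rF subset_refl fin D(6) c1 IH] unfolding e1 .
  have g2: "good vx K2 (vx r 0) (vx r 1)"
    using child_good[OF tm rF subset_refl fin D(7) c2 IH] unfolding e2 .
  note L = tri_labels[OF tm rF]
  have gnot: "r \<notin> K0" "r \<notin> K1" "r \<notin> K2" using D(5,6,7) by blast+
  have dj: "K2 \<inter> K1 = {}" using D(4) by blast
  have "good vx (insert r (K2 \<union> K1)) (vx r 1) (vx r 2)"
    by (rule combine2[OF L(2) L(3) L(1) L(6) not_sym[OF L(4)] not_sym[OF L(5)] good_sym[OF g2] good_sym[OF g1] gnot(3) gnot(2) dj])
  moreover have "insert r (K2 \<union> K1) \<inter> K0 = {}" using D gnot by blast
  ultimately obtain vs fs where "fp vx (insert r (K2 \<union> K1) \<union> K0) vs fs"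
    using good_join[OF _ g0] by blast
  moreover have "insert r (K2 \<union> K1) \<union> K0 = F" using D(1) by blast
  ultimately have "fp vx F vs fs" by simp
  then show ?thesis using fp_facet_path[of vx F vs fs] by blast
qed

end
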